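(* For a happy sequent $G$, its model $\mathcal{M}(G)=\langle \mathrm{Lab}(G), \le_G, R_G, V\rangle$ is a birelational model in which $R_G$ is transitive and reflexive, and which has the following two properties: (i) if $x:A$ occurs on the left-hand side of $G$, then $x \Vdash A$ in $\mathcal{M}(G)$; (ii) if $x:A$ occurs on the right-hand side of $G$, then $x \not\Vdash A$ in $\mathcal{M}(G)$.
   Context: Formulas are built from atoms $a$ and $\bot$ by $\wedge,\vee,\supset,\Box,\Diamond$. A birelational model $\langle W,R,\le,V\rangle$ consists of a nonempty set $W$, a relation $R$, a preorder $\le$ on $W$ satisfying (F1) if $xRy$ and $y\le z$ then there is $u$ with $x\le u$ and $uRz$, and (F2) if $x\le z$ and $xRy$ then there is $u$ with $zRu$ and $y\le u$, and a valuation $V\colon W\to 2^{\mathrm{Atoms}}$ that is monotone along $\le$. Forcing: $w\Vdash a$ iff $a\in V(w)$; $w\not\Vdash\bot$; $\wedge,\vee$ pointwise; $w\Vdash A\supset B$ iff for all $w'\ge w$, $w'\Vdash A$ implies $w'\Vdash B$; $w\Vdash\Box A$ iff for all $w',u$ with $w\le w'$ and $w'Ru$, $u\Vdash A$; $w\Vdash\Diamond A$ iff there is $u$ with $wRu$ and $u\Vdash A$. A labelled sequent $G$ is $\mathcal{R},\Gamma\Longrightarrow\Delta$, where $\mathcal{R}$ is a set of relational atoms $x\le y$ and $xRy$ between labels, and $\Gamma,\Delta$ are multisets of labelled formulas $x:A$. Write $x\le_G y$ ($xR_Gy$) if that atom is in $\mathcal{R}$; write $x:A^\bullet$ if $x:A\in\Gamma$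 and $x:A^\circ$ if $x:A\in\Delta$; $\mathrm{Lab}(G)$ is the set of labels of $G$. A labelled formula is happy in $G$ as follows: $x:a^\bullet$ always; $x:a^\circ$ iff not $x:a^\bullet$; $x:\bot^\bullet$ never; $x:\bot^\circ$ always; $x:(A\wedge B)^\bullet$ iff $x:A^\bullet$ and $x:B^\bullet$; $x:(A\wedge B)^\circ$ iff $x:A^\circ$ or $x:B^\circ$; $x:(A\vee B)^\bullet$ iff $x:A^\bullet$ or $x:B^\bullet$; $x:(A\vee B)^\circ$ iff $x:A^\circ$ and $x:B^\circ$; $x:(A\supset B)^\bullet$ iff $x:A^\circ$ or $x:B^\bullet$; $x:(A\supset B)^\circ$ iff $y:A^\bullet$ and $y:B^\circ$ for some $y$ with $x\le_G y$; $x:(\Box A)^\bullet$ iff $z:A^\bullet$ and $z:(\Box A)^\bullet$ for all $z$ with $xR_Gz$; $x:(\Box A)^\circ$ iff $z:A^\circ$ for some $y,z$ with $x\le_G y$, $yR_Gz$; $x:(\Diamond A)^\bullet$ iff $y:A^\bullet$ for some $y$ with $xR_Gy$; $x:(\Diamond A)^\circ$ iff $y:A^\circ$ and $y:(\Diamond A)^\circ$ for all $y$ with $xR_Gy$. A label is happy iff all formulas occurring at it are happy. $G$ is structurally saturated iff: if $x\le_G y$ and $x:C^\bullet$ then $y:C^\bullet$; (F1) and (F2) hold for $R_G,\le_G$; $\le_G$ and $R_G$ are reflexive on all labels of $G$ and transitive. $G$ is happy iff it is structurally saturated and all its labels are happy. The model of $G$ is $\mathcal{M}(G)=\langle \mathrm{Lab}(G),\le_G,R_G,V\rangle$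 with $a\in V(w)$ iff $w:a^\bullet$ in $G$. *)

theory Defs
  imports Main "HOL-Library.Multiset"
begin

datatype 'a fm =
    Atom 'a
  | Bot
  | And "'a fm" "'a fm"
  | Or "'a fm" "'a fm"
  | Imp "'a fm" "'a fm"
  | Box "'a fm"
  | Dia "'a fm"

text \<open>A birelational model with carrier W, modal relation R, intuitionistic preorder le
  and valuation V. Relations are given as predicates; they are required to live on W.\<close>

definition birel_model ::
  "'w set \<Rightarrow> ('w \<Rightarrow> 'w \<Rightarrow> bool) \<Rightarrow> ('w \<Rightarrow> 'w \<Rightarrow> bool) \<Rightarrow> ('w \<Rightarrow> 'a set) \<Rightarrow> bool" where
  "birel_model W R le V \<longleftrightarrow>
     W \<noteq> {} \<and>
     (\<forall>x y. R x y \<longrightarrow> x \<in> W \<and> y \<in> W) \<and>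
     (\<forall>x y. le x y \<longrightarrow> x \<in> W \<and> y \<in> W) \<and>
     (\<forall>x\<in>W. le x x) \<and>
     (\<forall>x y z. le x y \<longrightarrow> le y z \<longrightarrow> le x z) \<and>
     (\<forall>x y z. R x y \<longrightarrow> le y z \<longrightarrow> (\<exists>u. le x u \<and> R u z)) \<and>
     (\<forall>x y z. le x z \<longrightarrow> R x y \<longrightarrow> (\<exists>u. R z u \<and> le y u)) \<and>
     (\<forall>x y. le x y \<longrightarrow> V x \<subseteq> V y)"

fun forces ::
  "('w \<Rightarrow> 'w \<Rightarrow> bool) \<Rightarrow> ('w \<Rightarrow> 'w \<Rightarrow> bool) \<Rightarrow> ('w \<Rightarrow> 'a set) \<Rightarrow> 'w \<Rightarrow> 'a fm \<Rightarrow> bool" where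
  "forces R le V w (Atom a) = (a \<in> V w)"
| "forces R le V w Bot = False"
| "forces R le V w (And A B) = (forces R le V w A \<and> forces R le V w B)"
| "forces R le V w (Or A B) = (forces R le V w A \<or> forces R le V w B)"
| "forces R le V w (Imp A B) =
     (\<forall>w'. le w w' \<longrightarrow> forces R le V w' A \<longrightarrow> forces R le V w' B)"
| "forces R le V w (Box A) = (\<forall>w' u. le w w' \<longrightarrow> R w' u \<longrightarrow> forces R le V u A)"
| "forces R le V w (Dia A) = (\<exists>u. R w u \<and> forces R le V u A)"

datatype 'l rel_atom = LeAt 'l 'l | RAt 'l 'l

datatype ('l, 'a) sequent =
  Sequent "'l rel_atom set" "('l \<times> 'a fm) multiset" "('l \<times> 'a fm) multiset"

fun rels :: "('l, 'a) sequent \<Rightarrow> 'l rel_atom set" where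
  "rels (Sequent \<R> \<Gamma> \<Delta>) = \<R>"
fun lhs :: "('l, 'a) sequent \<Rightarrow> ('l \<times> 'a fm) multiset" where
  "lhs (Sequent \<R> \<Gamma> \<Delta>) = \<Gamma>"
fun rhs :: "('l, 'a) sequent \<Rightarrow> ('l \<times> 'a fm) multiset" where
  "rhs (Sequent \<R> \<Gamma> \<Delta>) = \<Delta>"

definition leG :: "('l, 'a) sequent \<Rightarrow> 'l \<Rightarrow> 'l \<Rightarrow> bool" where
  "leG G x y \<longleftrightarrow> LeAt x y \<in> rels G"
definition RG :: "('l, 'a) sequent \<Rightarrow> 'l \<Rightarrow> 'l \<Rightarrow> bool" where
  "RG G x y \<longleftrightarrow> RAt x y \<in> rels G"

definition inL :: "('l, 'a) sequent \<Rightarrow> 'l \<Rightarrow> 'a fm \<Rightarrow> bool" where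
  "inL G x A \<longleftrightarrow> (x, A) \<in># lhs G"
definition inR :: "('l, 'a) sequent \<Rightarrow> 'l \<Rightarrow> 'a fm \<Rightarrow> bool" where
  "inR G x A \<longleftrightarrow> (x, A) \<in># rhs G"

fun labs_rel :: "'l rel_atom \<Rightarrow> 'l set" where
  "labs_rel (LeAt x y) = {x, y}"
| "labs_rel (RAt x y) = {x, y}"

definition Lab :: "('l, 'a) sequent \<Rightarrow> 'l set" where
  "Lab G = (\<Union>r\<in>rels G. labs_rel r) \<union> fst ` set_mset (lhs G) \<union> fst ` set_mset (rhs G)"

fun happyL :: "('l, 'a) sequent \<Rightarrow> 'l \<Rightarrow> 'a fm \<Rightarrow> bool" where
  "happyL G x (Atom a) = True"
| "happyL G x Bot = False"
| "happyL G x (And A B) = (inL G x A \<and> inL G x B)"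
| "happyL G x (Or A B) = (inL G x A \<or> inL G x B)"
| "happyL G x (Imp A B) = (inR G x A \<or> inL G x B)"
| "happyL G x (Box A) = (\<forall>z. RG G x z \<longrightarrow> inL G z A \<and> inL G z (Box A))"
| "happyL G x (Dia A) = (\<exists>y. RG G x y \<and> inL G y A)"

fun happyR :: "('l, 'a) sequent \<Rightarrow> 'l \<Rightarrow> 'a fm \<Rightarrow> bool" where
  "happyR G x (Atom a) = (\<not> inL G x (Atom a))"
| "happyR G x Bot = True"
| "happyR G x (And A B) = (inR G x A \<or> inR G x B)"
| "happyR G x (Or A B) = (inR G x A \<and> inR G x B)"
| "happyR G x (Imp A B) = (\<exists>y. leG G x y \<and> inL G y A \<and> inR G y B)"
| "happyR G x (Box A) = (\<exists>y z. leG G x y \<and> RG G y z \<and> inR G z A)"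
| "happyR G x (Dia A) = (\<forall>y. RG G x y \<longrightarrow> inR G y A \<and> inR G y (Dia A))"

definition happy_label :: "('l, 'a) sequent \<Rightarrow> 'l \<Rightarrow> bool" where
  "happy_label G x \<longleftrightarrow>
     (\<forall>A. (inL G x A \<longrightarrow> happyL G x A) \<and> (inR G x A \<longrightarrow> happyR G x A))"

definition struct_saturated :: "('l, 'a) sequent \<Rightarrow> bool" where
  "struct_saturated G \<longleftrightarrow>
     (\<forall>x y C. leG G x y \<longrightarrow> inL G x C \<longrightarrow> inL G y C) \<and>
     (\<forall>x y z. RG G x y \<longrightarrow> leG G y z \<longrightarrow> (\<exists>u. leG G x u \<and> RG G u z)) \<and>
     (\<forall>x y z. leG G x z \<longrightarrow> RG G x y \<longrightarrow> (\<exists>u. RG G z u \<and> leG G y u)) \<and>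
     (\<forall>x\<in>Lab G. leG G x x \<and> RG G x x) \<and>
     (\<forall>x y z. leG G x y \<longrightarrow> leG G y z \<longrightarrow> leG G x z) \<and>
     (\<forall>x y z. RG G x y \<longrightarrow> RG G y z \<longrightarrow> RG G x z)"

definition happy :: "('l, 'a) sequent \<Rightarrow> bool" where
  "happy G \<longleftrightarrow> struct_saturated G \<and> (\<forall>x\<in>Lab G. happy_label G x)"

definition VG :: "('l, 'a) sequent \<Rightarrow> 'l \<Rightarrow> 'a set" where
  "VG G w = {a. inL G w (Atom a)}"

end

theory Submission
  imports Defs
begin

lemma inL_Lab: "inL G x A \<Longrightarrow> x \<in> Lab G"
  unfolding inL_def Lab_def by force

lemma inR_Lab: "inR G x A \<Longrightarrow> x \<in> Lab G"
  unfolding inR_def Lab_def by force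

lemma leG_Lab: "leG G x y \<Longrightarrow> x \<in> Lab G \<and> y \<in> Lab G"
  unfolding leG_def Lab_def by force

lemma RG_Lab: "RG G x y \<Longrightarrow> x \<in> Lab G \<and> y \<in> Lab G"
  unfolding RG_def Lab_def by force

lemma truth:
  assumes h: "happy G"
  shows "\<forall>x. (inL G x A \<longrightarrow> forces (RG G) (leG G) (VG G) x A)
            \<and> (inR G x A \<longrightarrow> \<not> forces (RG G) (leG G) (VG G) x A)"
proof -
  have ss: "struct_saturated G" and hl: "\<And>x. x \<in> Lab G \<Longrightarrow> happy_label G x"
    using h unfolding happy_def by auto
  have HL: "\<And>x A. inL G x A \<Longrightarrow> happyL G x A"
    using hl[OF inL_Lab] unfolding happy_label_def by blast
  have HR: "\<And>x A. inR G x A \<Longrightarrow> happyR G x A"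
    using hl[OF inR_Lab] unfolding happy_label_def by blast
  have mono: "\<And>x y C. leG G x y \<Longrightarrow> inL G x C \<Longrightarrow> inL G y C"
    using ss unfolding struct_saturated_def by blast
  show ?thesis
  proof (induction A)
    case (Atom a)
    then show ?case using HR[of _ "Atom a"] by (auto simp: VG_def)
  next
    case Bot
    then show ?case using HL[of _ Bot] by auto
  next
    case (And A B)
    then show ?case using HL[of _ "And A B"] HR[of _ "And A B"] by auto
  next
    case (Or A B)
    then show ?case using HL[of _ "Or A B"] HR[of _ "Or A B"] by auto
  next
    case (Imp A B)
    show ?case
    proof (intro allI conjI impI)
      fix x assume "inL G x (Imp A B)"
      then show "forces (RG G) (leG G) (VG G) x (Imp A B)"
      proof (simp, intro allI impI)
        fix w assume w: "leG G x w" "forces (RG G) (leG G) (VG G) w A"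
        have "inL G w (Imp A B)" using mono w(1) \<open>inL G x (Imp A B)\<close> by blast
        then have "inR G w A \<or> inL G w B" using HL[of w "Imp A B"] by simp
        then show "forces (RG G) (leG G) (VG G) w B" using Imp w(2) by blast
      qed
    next
      fix x assume "inR G x (Imp A B)"
      then show "\<not> forces (RG G) (leG G) (VG G) x (Imp A B)"
      proof -
        obtain y where "leG G x y" "inL G y A" "inR G y B" using HR[OF \<open>inR G x (Imp A B)\<close>] by auto
        then show ?thesis using Imp by auto
      qed
    qed
  next
    case (Box A)
    show ?case
    proof (intro allI conjI impI)
      fix x assume "inL G x (Box A)"
      then show "forces (RG G) (leG G) (VG G) x (Box A)"
      proof (simp, intro allI impI)
        fix w u assume w: "leG G x w" "RG G w u"
        have "inL G w (Box A)" using mono w(1) \<open>inL G x (Box A)\<close> by blast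
        then have "inL G u A" using HL[of w "Box A"] w(2) by simp
        then show "forces (RG G) (leG G) (VG G) u A" using Box by blast
      qed
    next
      fix x assume "inR G x (Box A)"
      then show "\<not> forces (RG G) (leG G) (VG G) x (Box A)"
      proof -
        obtain y z where "leG G x y" "RG G y z" "inR G z A" using HR[OF \<open>inR G x (Box A)\<close>] by auto
        then show ?thesis using Box by auto
      qed
    qed
  next
    case (Dia A)
    show ?case
    proof (intro allI conjI impI)
      fix x assume "inL G x (Dia A)"
      then show "forces (RG G) (leG G) (VG G) x (Dia A)"
      proof -
        obtain y where "RG G x y" "inL G y A" using HL[OF \<open>inL G x (Dia A)\<close>] by auto
        then show ?thesis using Dia by auto
      qed
    next
      fix x assume "inR G x (Dia A)"
      then show "\<not> forces (RG G) (leG G) (VG G) x (Dia A)"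
      proof (simp, intro allI impI)
        fix y assume "RG G x y"
        then have "inR G y A" using HR[OF \<open>inR G x (Dia A)\<close>] by auto
        then show "\<not> forces (RG G) (leG G) (VG G) y A" using Dia by blast
      qed
    qed
  qed
qed

theorem mainTheorem3:
  fixes G :: "('l, 'a) sequent"
  assumes "happy G"
    and "Lab G \<noteq> {}"
  shows "birel_model (Lab G) (RG G) (leG G) (VG G)
       \<and> (\<forall>x\<in>Lab G. RG G x x)
       \<and> (\<forall>x y z. RG G x y \<longrightarrow> RG G y z \<longrightarrow> RG G x z)
       \<and> (\<forall>x A. (x, A) \<in># lhs G \<longrightarrow> forces (RG G) (leG G) (VG G) x A)
       \<and> (\<forall>x A. (x, A) \<in># rhs G \<longrightarrow> \<not> forces (RG G) (leG G) (VG G) x A)"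
proof -
  have ss: "struct_saturated G" using assms(1) unfolding happy_def by auto
  note S = ss[unfolded struct_saturated_def]
  have s1: "\<forall>x y C. leG G x y \<longrightarrow> inL G x C \<longrightarrow> inL G y C" using S by (elim conjE)
  have s2: "\<forall>x y z. RG G x y \<longrightarrow> leG G y z \<longrightarrow> (\<exists>u. leG G x u \<and> RG G u z)" using S by (elim conjE)
  have s3: "\<forall>x y z. leG G x z \<longrightarrow> RG G x y \<longrightarrow> (\<exists>u. RG G z u \<and> leG G y u)" using S by (elim conjE)
  have s4: "\<forall>x\<in>Lab G. leG G x x \<and> RG G x x" using S by (elim conjE)
  have s5: "\<forall>x y z. leG G x y \<longrightarrow> leG G y z \<longrightarrow> leG G x z" using S by (elim conjE)
  have s6: "\<forall>x y z. RG G x y \<longrightarrow> RG G y z \<longrightarrow> RG G x z" using S by (elim conjE)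
  have vm: "\<forall>x y. leG G x y \<longrightarrow> VG G x \<subseteq> VG G y"
    using s1 unfolding VG_def by blast
  have r1: "\<forall>x y. RG G x y \<longrightarrow> x \<in> Lab G \<and> y \<in> Lab G" by (intro allI impI) (erule RG_Lab)
  have r2: "\<forall>x y. leG G x y \<longrightarrow> x \<in> Lab G \<and> y \<in> Lab G" by (intro allI impI) (erule leG_Lab)
  have r3: "\<forall>x\<in>Lab G. leG G x x" using s4 by blast
  have r4: "\<forall>x\<in>Lab G. RG G x x" using s4 by blast
  have bm: "birel_model (Lab G) (RG G) (leG G) (VG G)"
    unfolding birel_model_def
    using assms(2) r1 r2 r3 s5 s2 s3 vm by (intro conjI)
  have t1: "\<forall>x A. (x, A) \<in># lhs G \<longrightarrow> forces (RG G) (leG G) (VG G) x A"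
    using truth[OF assms(1)] unfolding inL_def by blast
  have t2: "\<forall>x A. (x, A) \<in># rhs G \<longrightarrow> \<not> forces (RG G) (leG G) (VG G) x A"
    using truth[OF assms(1)] unfolding inR_def by blast
  show ?thesis using bm r4 s6 t1 t2 by (intro conjI)
qed

end
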